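(* Let $L=(L_{\mathsf{yes}},L_{\mathsf{no}})$ be a $\mathbf{QMA}$ promise problem with an associated 2-local $\{ZZ,XX\}$ Hamiltonian family as described in the context, with parameters $\alpha<\beta$. Then the protocol $\Pi_{\mathsf{NIP}}$ described in the context satisfies $(1-\alpha)$-completeness and adaptive statistical $(1-\beta)$-soundness.
   Context: Hamiltonian family: a classical deterministic polynomial-time map sends $\mathtt{x}$ to an $N$-qubit Hamiltonian $\mathcal{H}_\mathtt{x}=\sum_{j_1<j_2}\frac{p_{j_1,j_2}}{2}\left(\frac{I+s_{j_1,j_2}X_{j_1}X_{j_2}}{2}+\frac{I+s_{j_1,j_2}Z_{j_1}Z_{j_2}}{2}\right)$ with $N=\mathsf{poly}(|\mathtt{x}|)$, $p_{j_1,j_2}>0$, $\sum p_{j_1,j_2}=1$, $s_{j_1,j_2}\in\{\pm1\}$; there are $0<\alpha<\beta<1$ with $\beta-\alpha\ge1/\mathsf{poly}(|\mathtt{x}|)$ such that for $\mathtt{x}\in L_{\mathsf{yes}}$ any witness $\mathtt{w}\in R_L(\mathtt{x})$ can be converted in quantum polynomial time into $\rho_{\mathrm{hist}}$ with $\mathrm{Tr}(\rho_{\mathrm{hist}}\mathcal{H}_\mathtt{x})\le\alpha$, and for $\mathtt{x}\in L_{\mathsf{no}}$ every $N$-qubit $\rho$ has $\mathrm{Tr}(\rho\mathcal{H}_\mathtt{x})\ge\beta$. $H$ is the Hadamard gate. Bell measurement outcomes $(x_j,z_j)$ follow the teleportation convention (measuring a qubit of $\rho$ together with half of a Bell pair yields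 $(x,z)$ and leaves the other half in $X^xZ^z\rho Z^zX^x$). Protocol $\Pi_{\mathsf{NIP}}$: $\mathsf{Setup}(1^\lambda)$ samples $(h,m_1,\dots,m_N)\leftarrow\{0,1\}^{N+1}$ and outputs $k_P=\bigotimes_{j=1}^N H^h|m_j\rangle$ and $k_V=(h,m_1,\dots,m_N)$. $\mathsf{Prove}(k_P,\mathtt{x},\mathtt{w})$ builds $\rho_{\mathrm{hist}}$ from $\mathtt{w}$, Bell-measures the $j$-th qubits of $\rho_{\mathrm{hist}}$ and $k_P$ for each $j\in[N]$, and outputs $\pi=(x,z)$ of outcomes. $\mathsf{Verify}(k_V,\mathtt{x},\pi)$ samples $(j_1,j_2)$ with probability $p_{j_1,j_2}$, sets $m'_{j_b}=m_{j_b}\oplus(hz_{j_b}\oplus(1-h)x_{j_b})$ for $b\in\{1,2\}$, and outputs $\top$ iff $(-1)^{m'_{j_1}\oplus m'_{j_2}}=-s_{j_1,j_2}$. $c$-completeness: for all $\mathtt{x}\in L_{\mathsf{yes}}$, $\mathtt{w}\in R_L(\mathtt{x})$, the honest proof is accepted with probability $\ge c$. Adaptive statistical $s$-soundness: for every unbounded $\mathcal{A}$ receiving $k_P$ and outputting $(\mathtt{x},\pi)$, $\Pr[\mathtt{x}\in L_{\mathsf{no}}\wedge\mathsf{Verify}(k_V,\mathtt{x},\pi)=\top]\le s$. *)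

theory Defs
  imports Complex_Main
begin

text \<open>An n-qubit operator is a complex matrix indexed by computational-basis
strings, i.e. boolean lists of length n (bit True = 1).  Qubits are indexed
0,...,n-1 (list positions).  Values of an operator outside bit strings of
length n are irrelevant, since all sums range over such strings.\<close>

type_synonym op = "bool list \<Rightarrow> bool list \<Rightarrow> complex"
type_synonym op1 = "bool \<Rightarrow> bool \<Rightarrow> complex"

definition bits :: "nat \<Rightarrow> bool list set" where
  "bits n = {xs. length xs = n}"

definition tr :: "nat \<Rightarrow> op \<Rightarrow> complex" where
  "tr n A = (\<Sum>a\<in>bits n. A a a)"

definition mmul :: "nat \<Rightarrow> op \<Rightarrow> op \<Rightarrow> op" where
  "mmul n A B = (\<lambda>a c. \<Sum>b\<in>bits n. A a b * B b c)"

definition psd :: "nat \<Rightarrow> op \<Rightarrow> bool" where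
  "psd n A \<longleftrightarrow> (\<forall>v :: bool list \<Rightarrow> complex.
      let q = (\<Sum>a\<in>bits n. \<Sum>b\<in>bits n. cnj (v a) * A a b * v b)
      in Im q = 0 \<and> 0 \<le> Re q)"

definition density :: "nat \<Rightarrow> op \<Rightarrow> bool" where
  "density n \<rho> \<longleftrightarrow> psd n \<rho> \<and> tr n \<rho> = 1"

definition tensor :: "nat \<Rightarrow> op \<Rightarrow> op \<Rightarrow> op" where
  "tensor n A B = (\<lambda>a b. A (take n a) (take n b) * B (drop n a) (drop n b))"

definition kron_all :: "nat \<Rightarrow> (nat \<Rightarrow> op1) \<Rightarrow> op" where
  "kron_all n Q = (\<lambda>a b. \<Prod>i<n. Q i (a ! i) (b ! i))"

definition I1 :: op1 where "I1 u v = (if u = v then 1 else 0)"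
definition X1 :: op1 where "X1 u v = (if u \<noteq> v then 1 else 0)"
definition Z1 :: op1 where "Z1 u v = (if u = v then (if u then -1 else 1) else 0)"
definition H1 :: op1 where
  "H1 u v = (if u \<and> v then -1 else 1) / complex_of_real (sqrt 2)"

definition mm1 :: "op1 \<Rightarrow> op1 \<Rightarrow> op1" where
  "mm1 A B = (\<lambda>u w. A u False * B False w + A u True * B True w)"

definition pw1 :: "op1 \<Rightarrow> bool \<Rightarrow> op1" where
  "pw1 P b = (if b then P else I1)"

definition Idq :: "nat \<Rightarrow> op" where
  "Idq n = kron_all n (\<lambda>_. I1)"

definition two_local :: "nat \<Rightarrow> op1 \<Rightarrow> nat \<Rightarrow> nat \<Rightarrow> op" where
  "two_local n P j1 j2 = kron_all n (\<lambda>i. if i = j1 \<or> i = j2 then P else I1)"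

definition pairs :: "nat \<Rightarrow> (nat \<times> nat) set" where
  "pairs n = {(j1, j2). j1 < j2 \<and> j2 < n}"

definition ham :: "nat \<Rightarrow> (nat \<times> nat \<Rightarrow> real) \<Rightarrow> (nat \<times> nat \<Rightarrow> real) \<Rightarrow> op" where
  "ham n p s = (\<lambda>a b. \<Sum>(j1, j2)\<in>pairs n. complex_of_real (p (j1, j2) / 2) *
      ((Idq n a b + complex_of_real (s (j1, j2)) * two_local n X1 j1 j2 a b) / 2
     + (Idq n a b + complex_of_real (s (j1, j2)) * two_local n Z1 j1 j2 a b) / 2))"

definition kP_vec :: "nat \<Rightarrow> bool \<Rightarrow> bool list \<Rightarrow> bool list \<Rightarrow> complex" where
  "kP_vec n h m = (\<lambda>a. \<Prod>j<n. pw1 H1 h (a ! j) (m ! j))"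

definition kP :: "nat \<Rightarrow> bool \<Rightarrow> bool list \<Rightarrow> op" where
  "kP n h m = (\<lambda>a b. kP_vec n h m a * cnj (kP_vec n h m b))"

text \<open>Bell basis fixed by the teleportation convention: outcome (x,z) on a pair
(A,B) corresponds to the vector (Z^z X^x \<otimes> I)|Phi+>, so that measuring A together
with half B of a Bell pair BC leaves C in X^x Z^z rho Z^z X^x.\<close>
definition bell_amp :: "bool \<Rightarrow> bool \<Rightarrow> bool \<Rightarrow> bool \<Rightarrow> complex" where
  "bell_amp x z u v = mm1 (pw1 Z1 z) (pw1 X1 x) u v / complex_of_real (sqrt 2)"

definition bell_proj :: "nat \<Rightarrow> bool list \<Rightarrow> bool list \<Rightarrow> op" where
  "bell_proj n xs zs = (\<lambda>a b. \<Prod>j<n.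
      bell_amp (xs ! j) (zs ! j) (a ! j) (a ! (n + j))
      * cnj (bell_amp (xs ! j) (zs ! j) (b ! j) (b ! (n + j))))"

definition prove_prob :: "nat \<Rightarrow> op \<Rightarrow> bool \<Rightarrow> bool list \<Rightarrow> bool list \<times> bool list \<Rightarrow> real" where
  "prove_prob n \<rho> h m \<pi> =
     Re (tr (2 * n) (mmul (2 * n) (bell_proj n (fst \<pi>) (snd \<pi>)) (tensor n \<rho> (kP n h m))))"

definition sgn_bit :: "bool \<Rightarrow> real" where
  "sgn_bit b = (if b then -1 else 1)"

definition mprime :: "bool \<Rightarrow> bool list \<Rightarrow> bool list \<times> bool list \<Rightarrow> nat \<Rightarrow> bool" where
  "mprime h m \<pi> j = (m ! j \<noteq> (if h then snd \<pi> ! j else fst \<pi> ! j))"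

text \<open>Probability (over the verifier's choice of (j1,j2)) that
Verify((h,m), x, pi) accepts, where the instance x has Hamiltonian data (p,s).\<close>
definition verify_prob :: "nat \<Rightarrow> (nat \<times> nat \<Rightarrow> real) \<Rightarrow> (nat \<times> nat \<Rightarrow> real)
     \<Rightarrow> bool \<Rightarrow> bool list \<Rightarrow> bool list \<times> bool list \<Rightarrow> real" where
  "verify_prob n p s h m \<pi> = (\<Sum>(j1, j2)\<in>pairs n. p (j1, j2) *
      (if sgn_bit (mprime h m \<pi> j1 \<noteq> mprime h m \<pi> j2) = - s (j1, j2) then 1 else 0))"

definition honest_accept :: "nat \<Rightarrow> (nat \<times> nat \<Rightarrow> real) \<Rightarrow> (nat \<times> nat \<Rightarrow> real) \<Rightarrow> op \<Rightarrow> real" where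
  "honest_accept n p s \<rho> = (\<Sum>h\<in>(UNIV::bool set). \<Sum>m\<in>bits n. (1 / 2 ^ (n + 1)) *
      (\<Sum>\<pi>\<in>bits n \<times> bits n. prove_prob n \<rho> h m \<pi> * verify_prob n p s h m \<pi>))"

text \<open>An unbounded adaptive adversary receiving the n-qubit state k_P and
outputting a classical pair (x, pi) is described by a (sub-normalised,
possibly countably/infinitely indexed) POVM F on n qubits indexed by the
outputs: every F o is PSD and every finite partial sum is below the identity.\<close>
definition adversary :: "nat \<Rightarrow> ('x \<times> (bool list \<times> bool list) \<Rightarrow> op) \<Rightarrow> bool" where
  "adversary n F \<longleftrightarrow> (\<forall>ou. psd n (F ou)) \<and>
     (\<forall>S. finite S \<longrightarrow> psd n (\<lambda>a b. Idq n a b - (\<Sum>ou\<in>S. F ou a b)))"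

text \<open>Probability of the event "adversary outputs some o in S, fst o in Lno and
Verify accepts".  The probability of the event over all outputs is the
supremum of this over finite S.\<close>
definition cheat_prob :: "nat \<Rightarrow> ('x \<times> (bool list \<times> bool list) \<Rightarrow> op) \<Rightarrow> 'x set
    \<Rightarrow> ('x \<Rightarrow> nat \<times> nat \<Rightarrow> real) \<Rightarrow> ('x \<Rightarrow> nat \<times> nat \<Rightarrow> real)
    \<Rightarrow> ('x \<times> (bool list \<times> bool list)) set \<Rightarrow> real" where
  "cheat_prob n F Lno p s S = (\<Sum>h\<in>(UNIV::bool set). \<Sum>m\<in>bits n. (1 / 2 ^ (n + 1)) *
      (\<Sum>ou\<in>S. (if fst ou \<in> Lno then
          Re (tr n (mmul n (F ou) (kP n h m))) * verify_prob n (p (fst ou)) (s (fst ou)) h m (snd ou)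
        else 0)))"

end

theory Submission
  imports Defs
begin

lemma bits_Suc: "bits (Suc n) = (\<lambda>(u, a). u # a) ` (UNIV \<times> bits n)"
  unfolding bits_def by (auto simp: image_iff length_Suc_conv)

lemma finite_bits[simp]: "finite (bits n)"
proof (induction n)
  case 0 then show ?case by (simp add: bits_def)
next
  case (Suc n) then show ?case by (simp add: bits_Suc)
qed

lemma card_bits: "card (bits n) = 2 ^ n"
proof (induction n)
  case 0 then show ?case by (simp add: bits_def)
next
  case (Suc n)
  have "inj_on (\<lambda>(u, a). u # a) (UNIV \<times> bits n)" by (auto simp: inj_on_def)
  then show ?case using Suc by (simp add: bits_Suc card_image card_cartesian_product)
qed

lemma sum_prod_bits:
  fixes F :: "nat \<Rightarrow> bool \<Rightarrow> 'a::comm_semiring_1"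
  shows "(\<Sum>m\<in>bits n. \<Prod>j<n. F j (m ! j)) = (\<Prod>j<n. F j False + F j True)"
proof (induction n arbitrary: F)
  case 0 then show ?case by (simp add: bits_def)
next
  case (Suc n)
  have inj: "inj_on (\<lambda>(u, a). u # a) (UNIV \<times> bits n)" by (auto simp: inj_on_def)
  have "(\<Sum>m\<in>bits (Suc n). \<Prod>j<Suc n. F j (m ! j))
      = (\<Sum>(u,a)\<in>UNIV \<times> bits n. \<Prod>j<Suc n. F j ((u # a) ! j))"
    unfolding bits_Suc by (subst sum.reindex[OF inj]) (simp add: case_prod_beta)
  also have "\<dots> = (\<Sum>u\<in>UNIV. \<Sum>a\<in>bits n. F 0 u * (\<Prod>j<n. F (Suc j) (a ! j)))"
    by (subst sum.cartesian_product[symmetric]) (simp del: prod.lessThan_Suc add: prod.lessThan_Suc_shift)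
  also have "\<dots> = (\<Sum>u\<in>UNIV. F 0 u * (\<Prod>j<n. F (Suc j) False + F (Suc j) True))"
    by (simp add: sum_distrib_left[symmetric] Suc.IH[of "\<lambda>j. F (Suc j)"])
  also have "\<dots> = (\<Prod>j<Suc n. F j False + F j True)"
    by (simp del: prod.lessThan_Suc add: prod.lessThan_Suc_shift UNIV_bool distrib_right)
  finally show ?case .
qed

definition xorl :: "bool list \<Rightarrow> bool list \<Rightarrow> bool list" where
  "xorl a c = map2 (\<noteq>) a c"

lemma xorl_len[simp]: "length (xorl a c) = min (length a) (length c)"
  by (simp add: xorl_def)

lemma xorl_nth[simp]: "j < length a \<Longrightarrow> j < length c \<Longrightarrow> xorl a c ! j = (a ! j \<noteq> c ! j)"
  by (simp add: xorl_def)

lemma xorl_bits: "a \<in> bits n \<Longrightarrow> length c = n \<Longrightarrow> xorl a c \<in> bits n"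
  by (simp add: bits_def)

lemma xorl_inv: "a \<in> bits n \<Longrightarrow> length c = n \<Longrightarrow> xorl (xorl a c) c = a"
  by (rule nth_equalityI) (auto simp: bits_def)

lemma sum_xorl:
  assumes "length c = n"
  shows "(\<Sum>a\<in>bits n. f (xorl a c)) = (\<Sum>a\<in>bits n. f a)"
  by (rule sum.reindex_bij_witness[where i="\<lambda>a. xorl a c" and j="\<lambda>a. xorl a c"])
     (auto simp: xorl_inv xorl_bits assms)

lemma sum_xorl2:
  assumes "length c = n"
  shows "(\<Sum>a\<in>bits n. \<Sum>b\<in>bits n. f (xorl a c) (xorl b c)) = (\<Sum>a\<in>bits n. \<Sum>b\<in>bits n. f a b)"
  using sum_xorl[OF assms, of "\<lambda>a. \<Sum>b\<in>bits n. f a (xorl b c)"] sum_xorl[OF assms, of "f _"]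
  by simp

lemma bits_add: "bits (n + k) = (\<lambda>(a, b). a @ b) ` (bits n \<times> bits k)"
proof
  show "bits (n + k) \<subseteq> (\<lambda>(a, b). a @ b) ` (bits n \<times> bits k)"
  proof
    fix x assume "x \<in> bits (n + k)"
    then have "x = (\<lambda>(a, b). a @ b) (take n x, drop n x)" "(take n x, drop n x) \<in> bits n \<times> bits k"
      by (auto simp: bits_def)
    then show "x \<in> (\<lambda>(a, b). a @ b) ` (bits n \<times> bits k)" by blast
  qed
qed (auto simp: bits_def)

lemma sum_bits_add:
  "(\<Sum>a\<in>bits (n + k). f a) = (\<Sum>a1\<in>bits n. \<Sum>a2\<in>bits k. f (a1 @ a2))"
proof -
  have inj: "inj_on (\<lambda>(a, b). a @ b) (bits n \<times> bits k)"
    by (auto simp: inj_on_def bits_def)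
  show ?thesis unfolding bits_add
    by (subst sum.reindex[OF inj]) (simp add: sum.cartesian_product case_prod_beta)
qed


definition hr :: real where "hr = 1 / sqrt 2"
lemma hr_sq: "hr * hr = 1/2" by (simp add: hr_def)
lemma hr_sqc: "complex_of_real hr * complex_of_real hr = 1/2"
  by (metis hr_sq of_real_mult of_real_divide of_real_1 of_real_numeral)
lemma H1_alt: "H1 u v = complex_of_real (if u \<and> v then - hr else hr)"
  by (simp add: H1_def hr_def)
lemma sgn_bit_simps[simp]: "sgn_bit False = 1" "sgn_bit True = -1" by (simp_all add: sgn_bit_def)

lemma pq_I: "cnj (pw1 H1 h a False) * pw1 H1 h b False + cnj (pw1 H1 h a True) * pw1 H1 h b True = I1 b a"
  apply (cases h; cases a; cases b) 
  apply (simp_all add: pw1_def H1_alt I1_def hr_sqc)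
  done

lemma pq_P: "cnj (pw1 H1 h a False) * pw1 H1 h b False * complex_of_real (sgn_bit False)
   + cnj (pw1 H1 h a True) * pw1 H1 h b True * complex_of_real (sgn_bit True) = (if h then X1 else Z1) b a"
  apply (cases h; cases a; cases b) 
  apply (simp_all add: pw1_def H1_alt I1_def X1_def Z1_def hr_sqc)
  done
definition eps1 :: "bool \<Rightarrow> bool \<Rightarrow> bool \<Rightarrow> bool \<Rightarrow> real" where
  "eps1 h x z m = (if h then sgn_bit (x \<and> (m \<noteq> z)) else sgn_bit (z \<and> m))"

lemma pq_shift: "pw1 H1 h (a \<noteq> x) m * complex_of_real (sgn_bit (z \<and> (a \<noteq> x)))
   = complex_of_real (eps1 h x z m) * pw1 H1 h a (m \<noteq> (if h then z else x))"
  apply (cases h; cases a; cases x; cases z; cases m) 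
  apply (simp_all add: pw1_def H1_alt I1_def eps1_def)
  done

definition eps2 :: "bool \<Rightarrow> bool \<Rightarrow> bool \<Rightarrow> bool \<Rightarrow> real" where
  "eps2 h x z m = (if h then sgn_bit (x \<and> m) else sgn_bit (z \<and> (m \<noteq> x)))"

lemma bell_alt: "bell_amp x z u v = mm1 (pw1 Z1 z) (pw1 X1 x) u v * complex_of_real hr"
  by (simp add: bell_amp_def hr_def divide_complex_def)

lemma pq_bell: "bell_amp x z a False * cnj (pw1 H1 h False m) + bell_amp x z a True * cnj (pw1 H1 h True m)
   = complex_of_real (eps2 h x z m * hr) * pw1 H1 h a (m \<noteq> (if h then z else x))"
  apply (cases h; cases a; cases x; cases z; cases m) 
  apply (simp_all add: pw1_def H1_alt I1_def X1_def Z1_def mm1_def bell_alt eps2_def hr_sqc)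
  done


definition Q :: "nat \<Rightarrow> op \<Rightarrow> bool \<Rightarrow> bool list \<Rightarrow> real" where
  "Q n A h m = Re (\<Sum>a\<in>bits n. \<Sum>b\<in>bits n. cnj (kP_vec n h m a) * A a b * kP_vec n h m b)"

definition V0 :: "nat \<Rightarrow> (nat \<times> nat \<Rightarrow> real) \<Rightarrow> (nat \<times> nat \<Rightarrow> real) \<Rightarrow> bool list \<Rightarrow> real" where
  "V0 n p s m = (\<Sum>(j1, j2)\<in>pairs n. p (j1, j2) *
      (if sgn_bit (m ! j1 \<noteq> m ! j2) = - s (j1, j2) then 1 else 0))"

lemma basis_sum:
  "(\<Sum>m\<in>bits n. cnj (kP_vec n h m a) * kP_vec n h m b * (\<Prod>j<n. f j (m ! j)))
   = (\<Prod>j<n. cnj (pw1 H1 h (a ! j) False) * pw1 H1 h (b ! j) False * f j False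
            + cnj (pw1 H1 h (a ! j) True) * pw1 H1 h (b ! j) True * f j True)"
proof -
  have "(\<Sum>m\<in>bits n. cnj (kP_vec n h m a) * kP_vec n h m b * (\<Prod>j<n. f j (m ! j)))
      = (\<Sum>m\<in>bits n. \<Prod>j<n. cnj (pw1 H1 h (a ! j) (m ! j)) * pw1 H1 h (b ! j) (m ! j) * f j (m ! j))"
    by (simp add: kP_vec_def cnj_prod prod.distrib)
  also have "\<dots> = (\<Prod>j<n. cnj (pw1 H1 h (a ! j) False) * pw1 H1 h (b ! j) False * f j False
            + cnj (pw1 H1 h (a ! j) True) * pw1 H1 h (b ! j) True * f j True)"
    by (rule sum_prod_bits)
  finally show ?thesis .
qed

lemma Qsum:
  "(\<Sum>m\<in>bits n. Q n A h m * (\<Prod>j<n. fr j (m ! j)))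
   = Re (\<Sum>a\<in>bits n. \<Sum>b\<in>bits n. A a b *
       (\<Prod>j<n. cnj (pw1 H1 h (a ! j) False) * pw1 H1 h (b ! j) False * complex_of_real (fr j False)
            + cnj (pw1 H1 h (a ! j) True) * pw1 H1 h (b ! j) True * complex_of_real (fr j True)))"
proof -
  let ?v = "\<lambda>m. kP_vec n h m"
  let ?F = "\<lambda>m. complex_of_real (\<Prod>j<n. fr j (m ! j))"
  have "(\<Sum>m\<in>bits n. Q n A h m * (\<Prod>j<n. fr j (m ! j)))
      = Re (\<Sum>m\<in>bits n. (\<Sum>a\<in>bits n. \<Sum>b\<in>bits n. cnj (?v m a) * A a b * ?v m b) * ?F m)"
  proof -
    have e: "\<And>z r. Re z * r = Re (z * complex_of_real r)" by simp
    show ?thesis unfolding Q_def e by (rule Re_sum[symmetric])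
  qed
  also have "\<dots> = Re (\<Sum>m\<in>bits n. \<Sum>a\<in>bits n. \<Sum>b\<in>bits n. A a b * (cnj (?v m a) * ?v m b * ?F m))"
    by (rule arg_cong[where f=Re]) (simp add: sum_distrib_left sum_distrib_right mult_ac)
  also have "\<dots> = Re (\<Sum>a\<in>bits n. \<Sum>b\<in>bits n. \<Sum>m\<in>bits n. A a b * (cnj (?v m a) * ?v m b * ?F m))"
    by (subst sum.swap, subst (2) sum.swap, rule refl)
  also have "\<dots> = Re (\<Sum>a\<in>bits n. \<Sum>b\<in>bits n. A a b * (\<Sum>m\<in>bits n. cnj (?v m a) * ?v m b * (\<Prod>j<n. complex_of_real (fr j (m ! j)))))"
    by (rule arg_cong[where f=Re]) (simp add: sum_distrib_left of_real_prod)
  finally show ?thesis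
    by (simp only: basis_sum[of n h _ _ "\<lambda>j u. complex_of_real (fr j u)"])
qed
lemma Idq_eq: "a \<in> bits n \<Longrightarrow> b \<in> bits n \<Longrightarrow> Idq n a b = (if a = b then 1 else 0)"
proof -
  assume a: "a \<in> bits n" and b: "b \<in> bits n"
  show ?thesis
  proof (cases "a = b")
    case True then show ?thesis by (simp add: Idq_def kron_all_def I1_def)
  next
    case False
    have "\<exists>i<n. a ! i \<noteq> b ! i" using False a b by (auto simp: bits_def list_eq_iff_nth_eq)
    then obtain i where "i < n" "a ! i \<noteq> b ! i" by blast
    then show ?thesis using False by (auto simp: Idq_def kron_all_def I1_def prod_zero_iff)
  qed
qed

lemma tr_mmul: "tr n (mmul n A B) = (\<Sum>a\<in>bits n. \<Sum>b\<in>bits n. A a b * B b a)"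
  by (simp add: tr_def mmul_def)

lemma tr_mmul_Idq: "tr n (mmul n A (Idq n)) = tr n A"
proof -
  have "tr n (mmul n A (Idq n)) = (\<Sum>a\<in>bits n. \<Sum>b\<in>bits n. A a b * (if b = a then 1 else 0))"
    unfolding tr_mmul by (intro sum.cong refl) (simp add: Idq_eq)
  also have "\<dots> = tr n A" by (simp add: tr_def if_distrib[of "\<lambda>x. _ * x"] sum.delta' cong: if_cong)
  finally show ?thesis .
qed

lemma prod_if2:
  fixes g :: "nat \<Rightarrow> 'a::comm_monoid_mult"
  assumes "j1 < j2" "j2 < n"
  shows "(\<Prod>j<n. if j = j1 \<or> j = j2 then g j else 1) = g j1 * g j2"
proof -
  have "(\<Prod>j<n. if j = j1 \<or> j = j2 then g j else 1) = (\<Prod>j\<in>{j1, j2}. g j)"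
  proof -
    have "{x. x < n \<and> (x = j1 \<or> x = j2)} = {j1, j2}" using assms by auto
    then show ?thesis by (subst prod.inter_filter[symmetric]) auto
  qed
  also have "\<dots> = g j1 * g j2" using assms by simp
  finally show ?thesis .
qed

lemma pq_gen:
  "cnj (pw1 H1 h a False) * pw1 H1 h b False * complex_of_real (if c then sgn_bit False else 1)
   + cnj (pw1 H1 h a True) * pw1 H1 h b True * complex_of_real (if c then sgn_bit True else 1)
   = (if c then (if h then X1 else Z1) else I1) b a"
  using pq_P[of h a b] pq_I[of h a b] by (cases c) (simp_all del: sgn_bit_simps)

lemma sgn_bit_xor: "sgn_bit (u \<noteq> v) = sgn_bit u * sgn_bit v"
  by (simp add: sgn_bit_def)

lemma Qsum_P:
  assumes "(j1, j2) \<in> pairs n"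
  shows "(\<Sum>m\<in>bits n. Q n A h m * sgn_bit (m ! j1 \<noteq> m ! j2))
     = Re (tr n (mmul n A (two_local n (if h then X1 else Z1) j1 j2)))"
proof -
  have jj: "j1 < j2" "j2 < n" using assms by (auto simp: pairs_def)
  let ?fr = "\<lambda>j u. if j = j1 \<or> j = j2 then sgn_bit u else 1"
  have "(\<Sum>m\<in>bits n. Q n A h m * sgn_bit (m ! j1 \<noteq> m ! j2))
      = (\<Sum>m\<in>bits n. Q n A h m * (\<Prod>j<n. ?fr j (m ! j)))"
  proof (intro sum.cong refl)
    fix m
    have "(\<Prod>j<n. ?fr j (m ! j)) = sgn_bit (m ! j1) * sgn_bit (m ! j2)"
      using prod_if2[OF jj, of "\<lambda>j. sgn_bit (m ! j)"] by simp
    then show "Q n A h m * sgn_bit (m ! j1 \<noteq> m ! j2) = Q n A h m * (\<Prod>j<n. ?fr j (m ! j))"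
      by (simp only: sgn_bit_xor)
  qed
  also have "\<dots> = Re (\<Sum>a\<in>bits n. \<Sum>b\<in>bits n. A a b *
       (\<Prod>j<n. cnj (pw1 H1 h (a ! j) False) * pw1 H1 h (b ! j) False * complex_of_real (?fr j False)
            + cnj (pw1 H1 h (a ! j) True) * pw1 H1 h (b ! j) True * complex_of_real (?fr j True)))"
    by (rule Qsum)
  also have "\<dots> = Re (tr n (mmul n A (two_local n (if h then X1 else Z1) j1 j2)))"
    unfolding tr_mmul two_local_def kron_all_def
    by (simp only: pq_gen if_distrib[of "\<lambda>f. f _ _"])
  finally show ?thesis .
qed

lemma Qsum_1: "(\<Sum>m\<in>bits n. Q n A h m) = Re (tr n A)"
proof -
  have "(\<Sum>m\<in>bits n. Q n A h m) = (\<Sum>m\<in>bits n. Q n A h m * (\<Prod>j<n. (\<lambda>j u. 1) j (m ! j)))"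
    by simp
  also have "\<dots> = Re (\<Sum>a\<in>bits n. \<Sum>b\<in>bits n. A a b *
       (\<Prod>j<n. cnj (pw1 H1 h (a ! j) False) * pw1 H1 h (b ! j) False * complex_of_real ((\<lambda>j u. 1) j False)
            + cnj (pw1 H1 h (a ! j) True) * pw1 H1 h (b ! j) True * complex_of_real ((\<lambda>j u. 1) j True)))"
    by (rule Qsum)
  also have "\<dots> = Re (tr n (mmul n A (Idq n)))"
    unfolding tr_mmul Idq_def kron_all_def
    by (simp add: pq_I)
  finally show ?thesis by (simp add: tr_mmul_Idq)
qed


definition G :: "nat \<Rightarrow> (nat \<times> nat \<Rightarrow> real) \<Rightarrow> (nat \<times> nat \<Rightarrow> real) \<Rightarrow> op \<Rightarrow> real" where
  "G n p s A = (\<Sum>h\<in>(UNIV::bool set). \<Sum>m\<in>bits n. 1 / 2 ^ (n + 1) * (Q n A h m * V0 n p s m))"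

lemma sgn_bit_cases: "sgn_bit b = 1 \<or> sgn_bit b = -1" by (cases b) auto

lemma tr_lin:
  "tr n (mmul n A (\<lambda>a b. c * (B1 a b + d * B2 a b + d * B3 a b)))
   = c * (tr n (mmul n A B1) + d * tr n (mmul n A B2) + d * tr n (mmul n A B3))"
  unfolding tr_mmul
  by (simp add: sum_distrib_left sum.distrib ring_distribs mult_ac)

lemma tr_sum:
  "tr n (mmul n A (\<lambda>a b. \<Sum>J\<in>P. f J a b)) = (\<Sum>J\<in>P. tr n (mmul n A (f J)))"
  unfolding tr_mmul
  by (simp add: sum_distrib_left) (subst sum.swap, subst (2) sum.swap, rule refl)

lemma tr_ham:
  "tr n (mmul n A (ham n p s)) = (\<Sum>J\<in>pairs n. complex_of_real (p J / 2) *
     (tr n (mmul n A (Idq n)) + complex_of_real (s J) / 2 * tr n (mmul n A (two_local n X1 (fst J) (snd J)))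
      + complex_of_real (s J) / 2 * tr n (mmul n A (two_local n Z1 (fst J) (snd J)))))"
proof -
  have "ham n p s = (\<lambda>a b. \<Sum>J\<in>pairs n. complex_of_real (p J / 2) *
     (Idq n a b + complex_of_real (s J) / 2 * two_local n X1 (fst J) (snd J) a b
      + complex_of_real (s J) / 2 * two_local n Z1 (fst J) (snd J) a b))"
    unfolding ham_def case_prod_beta prod.collapse
    by (intro ext sum.cong refl) (simp add: field_simps)
  then show ?thesis
    by (simp only: tr_sum tr_lin)
qed

lemma G_formula:
  assumes s_pm: "\<And>J. J \<in> pairs n \<Longrightarrow> s J \<in> {-1, 1}"
  shows "G n p s A = 1 / 2 ^ n * ((\<Sum>J\<in>pairs n. p J) * Re (tr n A) - Re (tr n (mmul n A (ham n p s))))"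
proof -
  define TI where "TI = Re (tr n A)"
  define TP where "TP h J = Re (tr n (mmul n A (two_local n (if h then X1 else Z1) (fst J) (snd J))))" for h J
  have fin: "finite (pairs n)"
    by (rule finite_subset[of _ "{..<n} \<times> {..<n}"]) (auto simp: pairs_def)
  have V0_alt: "V0 n p s m = (\<Sum>J\<in>pairs n. p J * ((1 - s J * sgn_bit (m ! fst J \<noteq> m ! snd J)) / 2))" for m
    unfolding V0_def case_prod_beta prod.collapse
  proof (intro sum.cong refl)
    fix J assume J: "J \<in> pairs n"
    have "s J = 1 \<or> s J = -1" using s_pm[OF J] by auto
    then show "p J * (if sgn_bit (m ! fst J \<noteq> m ! snd J) = - s J then 1 else 0)
        = p J * ((1 - s J * sgn_bit (m ! fst J \<noteq> m ! snd J)) / 2)"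
      using sgn_bit_cases[of "m ! fst J \<noteq> m ! snd J"] by auto
  qed
  have inner: "(\<Sum>m\<in>bits n. Q n A h m * V0 n p s m) = (\<Sum>J\<in>pairs n. p J / 2 * (TI - s J * TP h J))" for h
  proof -
    have "(\<Sum>m\<in>bits n. Q n A h m * V0 n p s m)
        = (\<Sum>m\<in>bits n. \<Sum>J\<in>pairs n. Q n A h m * (p J * ((1 - s J * sgn_bit (m ! fst J \<noteq> m ! snd J)) / 2)))"
      by (simp add: V0_alt sum_distrib_left)
    also have "\<dots> = (\<Sum>J\<in>pairs n. \<Sum>m\<in>bits n. Q n A h m * (p J * ((1 - s J * sgn_bit (m ! fst J \<noteq> m ! snd J)) / 2)))"
      by (rule sum.swap)
    also have "\<dots> = (\<Sum>J\<in>pairs n. p J / 2 * ((\<Sum>m\<in>bits n. Q n A h m) - s J * (\<Sum>m\<in>bits n. Q n A h m * sgn_bit (m ! fst J \<noteq> m ! snd J))))"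
    proof (intro sum.cong refl)
      fix J
      let ?sg = "\<lambda>m. sgn_bit (m ! fst J \<noteq> m ! snd J)"
      have "(\<Sum>m\<in>bits n. Q n A h m * (p J * ((1 - s J * ?sg m) / 2)))
          = (\<Sum>m\<in>bits n. p J / 2 * Q n A h m - p J / 2 * s J * (Q n A h m * ?sg m))"
        by (intro sum.cong refl) (simp add: field_simps)
      also have "\<dots> = p J / 2 * (\<Sum>m\<in>bits n. Q n A h m) - p J / 2 * s J * (\<Sum>m\<in>bits n. Q n A h m * ?sg m)"
        by (simp only: sum_subtractf sum_distrib_left)
      finally show "(\<Sum>m\<in>bits n. Q n A h m * (p J * ((1 - s J * ?sg m) / 2)))
          = p J / 2 * ((\<Sum>m\<in>bits n. Q n A h m) - s J * (\<Sum>m\<in>bits n. Q n A h m * ?sg m))"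
        by (simp add: algebra_simps)
    qed
    also have "\<dots> = (\<Sum>J\<in>pairs n. p J / 2 * (TI - s J * TP h J))"
    proof (intro sum.cong refl)
      fix J assume J: "J \<in> pairs n"
      obtain j1 j2 where Jeq: "J = (j1, j2)" by (cases J)
      show "p J / 2 * ((\<Sum>m\<in>bits n. Q n A h m) - s J * (\<Sum>m\<in>bits n. Q n A h m * sgn_bit (m ! fst J \<noteq> m ! snd J)))
          = p J / 2 * (TI - s J * TP h J)"
        using Qsum_P[of j1 j2 n A h] J unfolding Jeq by (simp add: Qsum_1 TI_def TP_def)
    qed
    finally show ?thesis .
  qed
  have "G n p s A = 1 / 2 ^ (n + 1) * ((\<Sum>J\<in>pairs n. p J / 2 * (TI - s J * TP True J)) + (\<Sum>J\<in>pairs n. p J / 2 * (TI - s J * TP False J)))"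
  proof -
    have u: "(\<Sum>h\<in>(UNIV::bool set). f h) = f True + f False" for f :: "bool \<Rightarrow> real"
      by (simp add: UNIV_bool add.commute)
    have "G n p s A = (\<Sum>h\<in>UNIV. 1 / 2 ^ (n + 1) * (\<Sum>m\<in>bits n. Q n A h m * V0 n p s m))"
      unfolding G_def by (simp only: sum_distrib_left)
    then show ?thesis by (simp only: u inner distrib_left)
  qed
  also have "\<dots> = 1 / 2 ^ n * (\<Sum>J\<in>pairs n. p J / 4 * (2 * TI - s J * TP True J - s J * TP False J))"
    by (simp add: sum.distrib[symmetric] sum_distrib_left algebra_simps)
  also have "\<dots> = 1 / 2 ^ n * ((\<Sum>J\<in>pairs n. p J) * TI - (\<Sum>J\<in>pairs n. p J / 2 * (TI + s J / 2 * TP True J + s J / 2 * TP False J)))"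
  proof -
    have "(\<Sum>J\<in>pairs n. p J / 4 * (2 * TI - s J * TP True J - s J * TP False J))
       + (\<Sum>J\<in>pairs n. p J / 2 * (TI + s J / 2 * TP True J + s J / 2 * TP False J)) = (\<Sum>J\<in>pairs n. p J) * TI"
      unfolding sum.distrib[symmetric] sum_distrib_right
      by (intro sum.cong refl) (simp add: field_simps)
    then have "(\<Sum>J\<in>pairs n. p J / 4 * (2 * TI - s J * TP True J - s J * TP False J))
       = (\<Sum>J\<in>pairs n. p J) * TI - (\<Sum>J\<in>pairs n. p J / 2 * (TI + s J / 2 * TP True J + s J / 2 * TP False J))"
      by linarith
    then show ?thesis by (rule arg_cong[where f="\<lambda>x. 1 / 2 ^ n * x"])
  qed
  also have "(\<Sum>J\<in>pairs n. p J / 2 * (TI + s J / 2 * TP True J + s J / 2 * TP False J)) = Re (tr n (mmul n A (ham n p s)))"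
    unfolding tr_ham Re_sum TI_def TP_def by (simp add: tr_mmul_Idq)
  finally show ?thesis unfolding TI_def .
qed


definition Sg :: "nat \<Rightarrow> bool list \<Rightarrow> bool list \<Rightarrow> complex" where
  "Sg n z a = (\<Prod>j<n. complex_of_real (sgn_bit (z ! j \<and> a ! j)))"

definition conjop :: "nat \<Rightarrow> bool list \<Rightarrow> bool list \<Rightarrow> op \<Rightarrow> op" where
  "conjop n x z F = (\<lambda>a b. Sg n z a * F (xorl a x) (xorl b x) * Sg n z b)"

lemma sgn_bit_sq: "sgn_bit b * sgn_bit b = 1" by (cases b) auto

lemma Sg_sq: "Sg n z a * Sg n z a = 1"
  unfolding Sg_def prod.distrib[symmetric] of_real_mult[symmetric] sgn_bit_sq by simp

lemma Sg_cnj: "cnj (Sg n z a) = Sg n z a"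
  by (simp add: Sg_def cnj_prod)

lemma conj_form:
  assumes "length x = n"
  shows "(\<Sum>a\<in>bits n. \<Sum>b\<in>bits n. cnj (w a) * conjop n x z F a b * w b)
       = (\<Sum>a\<in>bits n. \<Sum>b\<in>bits n. cnj (Sg n z (xorl a x) * w (xorl a x)) * F a b * (Sg n z (xorl b x) * w (xorl b x)))"
proof -
  have "(\<Sum>a\<in>bits n. \<Sum>b\<in>bits n. cnj (w a) * conjop n x z F a b * w b)
      = (\<Sum>a\<in>bits n. \<Sum>b\<in>bits n. cnj (w (xorl a x)) * conjop n x z F (xorl a x) (xorl b x) * w (xorl b x))"
    by (rule sum_xorl2[OF assms, symmetric])
  also have "\<dots> = (\<Sum>a\<in>bits n. \<Sum>b\<in>bits n. cnj (Sg n z (xorl a x) * w (xorl a x)) * F a b * (Sg n z (xorl b x) * w (xorl b x)))"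
    by (intro sum.cong refl) (simp add: conjop_def xorl_inv assms Sg_cnj mult_ac)
  finally show ?thesis .
qed

lemma psd_conjop: "psd n F \<Longrightarrow> length x = n \<Longrightarrow> psd n (conjop n x z F)"
  unfolding psd_def Let_def
proof (intro allI)
  fix v :: "bool list \<Rightarrow> complex"
  assume F: "\<forall>v. Im (\<Sum>a\<in>bits n. \<Sum>b\<in>bits n. cnj (v a) * F a b * v b) = 0 \<and>
                  0 \<le> Re (\<Sum>a\<in>bits n. \<Sum>b\<in>bits n. cnj (v a) * F a b * v b)"
    and x: "length x = n"
  show "Im (\<Sum>a\<in>bits n. \<Sum>b\<in>bits n. cnj (v a) * conjop n x z F a b * v b) = 0 \<and>
        0 \<le> Re (\<Sum>a\<in>bits n. \<Sum>b\<in>bits n. cnj (v a) * conjop n x z F a b * v b)"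
    unfolding conj_form[OF x] using F[rule_format, of "\<lambda>a. Sg n z (xorl a x) * v (xorl a x)"] by simp
qed

lemma tr_conjop: "length x = n \<Longrightarrow> tr n (conjop n x z F) = tr n F"
proof -
  assume x: "length x = n"
  have "tr n (conjop n x z F) = (\<Sum>a\<in>bits n. F (xorl a x) (xorl a x))"
    unfolding tr_def conjop_def
    by (intro sum.cong refl) (metis Sg_sq mult.commute mult.left_commute mult_1_right)
  also have "\<dots> = tr n F" unfolding tr_def by (rule sum_xorl[OF x])
  finally show ?thesis .
qed

lemma vec_shift:
  assumes a: "a \<in> bits n" and x: "length x = n" and z: "length z = n" and m: "m \<in> bits n"
  shows "Sg n z (xorl a x) * kP_vec n h m (xorl a x)
       = complex_of_real (\<Prod>j<n. eps1 h (x ! j) (z ! j) (m ! j)) * kP_vec n h (xorl m (if h then z else x)) a"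
proof -
  have "Sg n z (xorl a x) * kP_vec n h m (xorl a x)
      = (\<Prod>j<n. pw1 H1 h (a ! j \<noteq> x ! j) (m ! j) * complex_of_real (sgn_bit (z ! j \<and> (a ! j \<noteq> x ! j))))"
    unfolding Sg_def kP_vec_def prod.distrib[symmetric] using a x
    by (intro prod.cong refl) (simp add: bits_def mult.commute)
  also have "\<dots> = (\<Prod>j<n. complex_of_real (eps1 h (x ! j) (z ! j) (m ! j)) * pw1 H1 h (a ! j) (m ! j \<noteq> (if h then z ! j else x ! j)))"
    by (simp only: pq_shift)
  also have "\<dots> = complex_of_real (\<Prod>j<n. eps1 h (x ! j) (z ! j) (m ! j)) * kP_vec n h (xorl m (if h then z else x)) a"
    unfolding kP_vec_def prod.distrib of_real_prod using m x z
    by (intro arg_cong2[where f="(*)"] refl prod.cong) (auto simp: bits_def)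
  finally show ?thesis .
qed

lemma eps1_sq: "eps1 h x z m * eps1 h x z m = 1"
  by (simp add: eps1_def sgn_bit_sq)

lemma Q_shift:
  assumes x: "length x = n" and z: "length z = n" and m: "m \<in> bits n"
  shows "Q n (conjop n x z F) h m = Q n F h (xorl m (if h then z else x))"
proof -
  define E where "E = (\<Prod>j<n. eps1 h (x ! j) (z ! j) (m ! j))"
  have EE: "E * E = 1" unfolding E_def prod.distrib[symmetric] eps1_sq by simp
  let ?v = "kP_vec n h (xorl m (if h then z else x))"
  have "(\<Sum>a\<in>bits n. \<Sum>b\<in>bits n. cnj (kP_vec n h m a) * conjop n x z F a b * kP_vec n h m b)
      = (\<Sum>a\<in>bits n. \<Sum>b\<in>bits n. cnj (complex_of_real E * ?v a) * F a b * (complex_of_real E * ?v b))"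
    unfolding conj_form[OF x] using vec_shift[OF _ x z m] E_def
    by (intro sum.cong refl) simp
  also have "\<dots> = (\<Sum>a\<in>bits n. \<Sum>b\<in>bits n. complex_of_real (E * E) * (cnj (?v a) * F a b * ?v b))"
    by (intro sum.cong refl) (simp add: mult_ac)
  also have "\<dots> = (\<Sum>a\<in>bits n. \<Sum>b\<in>bits n. cnj (?v a) * F a b * ?v b)"
    by (simp add: EE)
  finally show ?thesis unfolding Q_def by simp
qed


definition cvec :: "nat \<Rightarrow> bool list \<Rightarrow> bool list" where
  "cvec n l = map (\<lambda>j. l ! j) [0..<n]"

lemma cvec_len[simp]: "length (cvec n l) = n" by (simp add: cvec_def)
lemma cvec_nth[simp]: "j < n \<Longrightarrow> cvec n l ! j = l ! j" by (simp add: cvec_def)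

definition cor :: "nat \<Rightarrow> bool \<Rightarrow> bool list \<times> bool list \<Rightarrow> bool list" where
  "cor n h \<pi> = (if h then cvec n (snd \<pi>) else cvec n (fst \<pi>))"

lemma cor_len[simp]: "length (cor n h \<pi>) = n" by (simp add: cor_def)

lemma eps2_sq: "eps2 h x z m * eps2 h x z m = 1"
  by (simp add: eps2_def sgn_bit_sq)

lemma w_formula:
  assumes a1: "a1 \<in> bits n" and m: "m \<in> bits n"
  shows "(\<Sum>a2\<in>bits n. (\<Prod>j<n. bell_amp (xs ! j) (zs ! j) (a1 ! j) (a2 ! j)) * cnj (kP_vec n h m a2))
    = complex_of_real (\<Prod>j<n. eps2 h (xs ! j) (zs ! j) (m ! j) * hr) * kP_vec n h (xorl m (cor n h (xs, zs))) a1"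
proof -
  have "(\<Sum>a2\<in>bits n. (\<Prod>j<n. bell_amp (xs ! j) (zs ! j) (a1 ! j) (a2 ! j)) * cnj (kP_vec n h m a2))
      = (\<Sum>a2\<in>bits n. \<Prod>j<n. bell_amp (xs ! j) (zs ! j) (a1 ! j) (a2 ! j) * cnj (pw1 H1 h (a2 ! j) (m ! j)))"
    by (simp add: kP_vec_def cnj_prod prod.distrib)
  also have "\<dots> = (\<Prod>j<n. bell_amp (xs ! j) (zs ! j) (a1 ! j) False * cnj (pw1 H1 h False (m ! j))
                        + bell_amp (xs ! j) (zs ! j) (a1 ! j) True * cnj (pw1 H1 h True (m ! j)))"
    by (rule sum_prod_bits)
  also have "\<dots> = (\<Prod>j<n. complex_of_real (eps2 h (xs ! j) (zs ! j) (m ! j) * hr)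
       * pw1 H1 h (a1 ! j) (m ! j \<noteq> (if h then zs ! j else xs ! j)))"
    by (simp only: pq_bell)
  also have "\<dots> = complex_of_real (\<Prod>j<n. eps2 h (xs ! j) (zs ! j) (m ! j) * hr) * kP_vec n h (xorl m (cor n h (xs, zs))) a1"
    unfolding kP_vec_def of_real_prod prod.distrib[symmetric] using m
    by (intro prod.cong refl) (auto simp: bits_def cor_def)
  finally show ?thesis .
qed

lemma prove_prob_formula:
  assumes m: "m \<in> bits n"
  shows "prove_prob n \<rho> h m (xs, zs) = 1 / 2 ^ n * Q n \<rho> h (xorl m (cor n h (xs, zs)))"
proof -
  define \<beta> where "\<beta> a1 a2 = (\<Prod>j<n. bell_amp (xs ! j) (zs ! j) (a1 ! j) (a2 ! j))" for a1 a2
  define v where "v = kP_vec n h m"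
  define w where "w a1 = (\<Sum>a2\<in>bits n. \<beta> a1 a2 * cnj (v a2))" for a1
  define v' where "v' = kP_vec n h (xorl m (cor n h (xs, zs)))"
  define K where "K = (\<Prod>j<n. eps2 h (xs ! j) (zs ! j) (m ! j) * hr)"
  have KK: "K * K = (1 / 2) ^ n"
    unfolding K_def prod.distrib[symmetric]
    by (simp add: hr_sq eps2_sq mult_ac flip: mult.assoc)
  have wK: "w a1 = complex_of_real K * v' a1" if "a1 \<in> bits n" for a1
    unfolding w_def \<beta>_def v_def v'_def K_def using w_formula[OF that m] .
  have B: "bell_proj n xs zs (a1 @ a2) (b1 @ b2) = \<beta> a1 a2 * cnj (\<beta> b1 b2)"
    if "a1 \<in> bits n" "a2 \<in> bits n" "b1 \<in> bits n" "b2 \<in> bits n" for a1 a2 b1 b2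
    using that unfolding bell_proj_def \<beta>_def
    by (simp add: bits_def nth_append prod.distrib cnj_prod)
  have M: "tensor n \<rho> (kP n h m) (b1 @ b2) (a1 @ a2) = \<rho> b1 a1 * (v b2 * cnj (v a2))"
    if "a1 \<in> bits n" "b1 \<in> bits n" for a1 a2 b1 b2
    using that unfolding tensor_def kP_def v_def by (simp add: bits_def)
  have "tr (2 * n) (mmul (2 * n) (bell_proj n xs zs) (tensor n \<rho> (kP n h m)))
     = (\<Sum>a1\<in>bits n. \<Sum>a2\<in>bits n. \<Sum>b1\<in>bits n. \<Sum>b2\<in>bits n.
          bell_proj n xs zs (a1 @ a2) (b1 @ b2) * tensor n \<rho> (kP n h m) (b1 @ b2) (a1 @ a2))"
    unfolding tr_mmul mult_2 sum_bits_add ..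
  also have "\<dots> = (\<Sum>a1\<in>bits n. \<Sum>a2\<in>bits n. \<Sum>b1\<in>bits n. \<Sum>b2\<in>bits n.
          \<beta> a1 a2 * cnj (\<beta> b1 b2) * (\<rho> b1 a1 * (v b2 * cnj (v a2))))"
    by (intro sum.cong refl) (simp add: B M)
  also have "\<dots> = (\<Sum>a1\<in>bits n. \<Sum>b1\<in>bits n. \<Sum>a2\<in>bits n. \<Sum>b2\<in>bits n.
          \<beta> a1 a2 * cnj (\<beta> b1 b2) * (\<rho> b1 a1 * (v b2 * cnj (v a2))))"
    by (rule sum.cong[OF refl], rule sum.swap)
  also have "\<dots> = (\<Sum>a1\<in>bits n. \<Sum>b1\<in>bits n. cnj (w b1) * \<rho> b1 a1 * w a1)"
    unfolding w_def
    apply (intro sum.cong refl)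
    apply (simp add: sum_distrib_left sum_distrib_right cnj_sum mult_ac)
    apply (rule sum.swap)
    done
  also have "\<dots> = (\<Sum>a1\<in>bits n. \<Sum>b1\<in>bits n. complex_of_real (K * K) * (cnj (v' b1) * \<rho> b1 a1 * v' a1))"
    by (intro sum.cong refl) (simp add: wK mult_ac)
  also have "\<dots> = complex_of_real ((1 / 2) ^ n) * (\<Sum>b1\<in>bits n. \<Sum>a1\<in>bits n. cnj (v' b1) * \<rho> b1 a1 * v' a1)"
    unfolding KK sum_distrib_left by (rule sum.swap)
  finally show ?thesis
    unfolding prove_prob_def Q_def v'_def by (simp add: power_one_over)
qed


lemma finite_pairs: "finite (pairs n)"
  by (rule finite_subset[of _ "{..<n} \<times> {..<n}"]) (auto simp: pairs_def)

lemma verify_eq: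
  assumes m: "m \<in> bits n"
  shows "verify_prob n p s h m \<pi> = V0 n p s (xorl m (cor n h \<pi>))"
  unfolding verify_prob_def V0_def
proof (intro sum.cong refl, clarify)
  fix j1 j2 assume "(j1, j2) \<in> pairs n"
  then have j: "j1 < n" "j2 < n" by (auto simp: pairs_def)
  have "mprime h m \<pi> j = (xorl m (cor n h \<pi>) ! j)" if "j < n" for j
    using m that by (auto simp: mprime_def bits_def cor_def)
  then show "p (j1, j2) * (if sgn_bit (mprime h m \<pi> j1 \<noteq> mprime h m \<pi> j2) = - s (j1, j2) then 1 else 0) =
         p (j1, j2) * (if sgn_bit (xorl m (cor n h \<pi>) ! j1 \<noteq> xorl m (cor n h \<pi>) ! j2) = - s (j1, j2) then 1 else 0)"
    using j by simp
qed

lemma honest_formula: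
  "honest_accept n p s \<rho> = 2 ^ n * G n p s \<rho>"
proof -
  define f where "f h m' = Q n \<rho> h m' * V0 n p s m'" for h m'
  define c :: real where "c = 1 / 2 ^ (n + 1)"
  have "honest_accept n p s \<rho> = (\<Sum>h\<in>UNIV. \<Sum>m\<in>bits n. c * (\<Sum>\<pi>\<in>bits n \<times> bits n. 1 / 2 ^ n * f h (xorl m (cor n h \<pi>))))"
    unfolding honest_accept_def c_def
  proof (intro sum.cong refl)
    fix h m assume m: "m \<in> bits n"
    have "(\<Sum>\<pi>\<in>bits n \<times> bits n. prove_prob n \<rho> h m \<pi> * verify_prob n p s h m \<pi>)
        = (\<Sum>\<pi>\<in>bits n \<times> bits n. 1 / 2 ^ n * f h (xorl m (cor n h \<pi>)))"
    proof (intro sum.cong refl, clarify)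
      fix xs zs
      show "prove_prob n \<rho> h m (xs, zs) * verify_prob n p s h m (xs, zs) = 1 / 2 ^ n * f h (xorl m (cor n h (xs, zs)))"
        unfolding prove_prob_formula[OF m] verify_eq[OF m] f_def by simp
    qed
    then show "1 / 2 ^ (n + 1) * (\<Sum>\<pi>\<in>bits n \<times> bits n. prove_prob n \<rho> h m \<pi> * verify_prob n p s h m \<pi>)
        = 1 / 2 ^ (n + 1) * (\<Sum>\<pi>\<in>bits n \<times> bits n. 1 / 2 ^ n * f h (xorl m (cor n h \<pi>)))" by simp
  qed
  also have "\<dots> = (\<Sum>h\<in>UNIV. \<Sum>\<pi>\<in>bits n \<times> bits n. \<Sum>m\<in>bits n. c / 2 ^ n * f h (xorl m (cor n h \<pi>)))"
    by (intro sum.cong refl) (simp add: sum_distrib_left sum.swap[of _ "bits n"])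
  also have "\<dots> = (\<Sum>h\<in>UNIV. \<Sum>\<pi>\<in>bits n \<times> bits n. \<Sum>m\<in>bits n. c / 2 ^ n * f h m)"
    by (intro sum.cong refl sum_xorl[of _ n "\<lambda>m'. c / 2 ^ n * f _ m'"]) simp
  also have "\<dots> = (\<Sum>h\<in>UNIV. (2 ^ n * 2 ^ n) * (\<Sum>m\<in>bits n. c / 2 ^ n * f h m))"
    by (simp add: card_cartesian_product card_bits)
  also have "\<dots> = 2 ^ n * G n p s \<rho>"
    unfolding G_def f_def c_def by (simp add: sum_distrib_left mult_ac)
  finally show ?thesis .
qed

lemma psd_diag:
  assumes "psd n A" "a \<in> bits n"
  shows "Im (A a a) = 0 \<and> 0 \<le> Re (A a a)"
proof -
  define v :: "bool list \<Rightarrow> complex" where "v c = (if c = a then 1 else 0)" for c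
  have "(\<Sum>c\<in>bits n. \<Sum>d\<in>bits n. cnj (v c) * A c d * v d) = A a a"
  proof -
    have "(\<Sum>c\<in>bits n. \<Sum>d\<in>bits n. cnj (v c) * A c d * v d) = (\<Sum>c\<in>bits n. if c = a then A a a else 0)"
    proof (intro sum.cong refl)
      fix c
      have "(\<Sum>d\<in>bits n. cnj (v c) * A c d * v d) = (\<Sum>d\<in>bits n. if d = a then cnj (v c) * A c a else 0)"
        by (intro sum.cong refl) (simp add: v_def)
      also have "\<dots> = cnj (v c) * A c a" using assms(2) by (simp add: sum.delta')
      also have "\<dots> = (if c = a then A a a else 0)" by (simp add: v_def)
      finally show "(\<Sum>d\<in>bits n. cnj (v c) * A c d * v d) = (if c = a then A a a else 0)" .
    qed
    also have "\<dots> = A a a" using assms(2) by (simp add: sum.delta')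
    finally show ?thesis .
  qed
  moreover have "Im (\<Sum>c\<in>bits n. \<Sum>d\<in>bits n. cnj (v c) * A c d * v d) = 0 \<and>
      0 \<le> Re (\<Sum>c\<in>bits n. \<Sum>d\<in>bits n. cnj (v c) * A c d * v d)"
    using assms(1) unfolding psd_def Let_def by blast
  ultimately show ?thesis by simp
qed

lemma tr_real:
  assumes "psd n A"
  shows "tr n A = complex_of_real (Re (tr n A))" "0 \<le> Re (tr n A)"
proof -
  have "Im (tr n A) = 0" unfolding tr_def Im_sum using psd_diag[OF assms] by simp
  then show "tr n A = complex_of_real (Re (tr n A))" by (simp add: complex_eq_iff)
  show "0 \<le> Re (tr n A)" unfolding tr_def Re_sum using psd_diag[OF assms] by (simp add: sum_nonneg)
qed

lemma Q_nonneg: "psd n A \<Longrightarrow> 0 \<le> Q n A h m"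
  unfolding Q_def psd_def Let_def by blast

lemma Q_kP: "Re (tr n (mmul n A (kP n h m))) = Q n A h m"
  unfolding Q_def tr_mmul kP_def by (simp add: mult_ac)

lemma psd_scale:
  assumes "psd n A" "0 < t"
  shows "psd n (\<lambda>a b. A a b / complex_of_real t)"
  unfolding psd_def Let_def
proof
  fix v :: "bool list \<Rightarrow> complex"
  have e: "(\<Sum>a\<in>bits n. \<Sum>b\<in>bits n. cnj (v a) * (A a b / complex_of_real t) * v b)
     = (\<Sum>a\<in>bits n. \<Sum>b\<in>bits n. cnj (v a) * A a b * v b) / complex_of_real t"
    by (simp add: sum_divide_distrib)
  have "Im (\<Sum>a\<in>bits n. \<Sum>b\<in>bits n. cnj (v a) * A a b * v b) = 0 \<and> 0 \<le> Re (\<Sum>a\<in>bits n. \<Sum>b\<in>bits n. cnj (v a) * A a b * v b)"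
    using assms(1) unfolding psd_def Let_def by blast
  then show "Im (\<Sum>a\<in>bits n. \<Sum>b\<in>bits n. cnj (v a) * (A a b / complex_of_real t) * v b) = 0 \<and>
        0 \<le> Re (\<Sum>a\<in>bits n. \<Sum>b\<in>bits n. cnj (v a) * (A a b / complex_of_real t) * v b)"
    unfolding e using assms(2) by (simp add: Im_divide_of_real Re_divide_of_real)
qed

lemma tr_scale: "tr n (\<lambda>a b. A a b / c) = tr n A / c"
  by (simp add: tr_def sum_divide_distrib)

lemma tr_mmul_scale: "tr n (mmul n (\<lambda>a b. A a b / c) B) = tr n (mmul n A B) / c"
  by (simp add: tr_mmul sum_divide_distrib)

lemma V0_le:
  assumes "\<And>J. J \<in> pairs n \<Longrightarrow> p J > 0" "(\<Sum>J\<in>pairs n. p J) = 1"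
  shows "V0 n p s m \<le> 1"
proof -
  have "V0 n p s m \<le> (\<Sum>J\<in>pairs n. p J)"
    unfolding V0_def case_prod_beta using assms(1) by (intro sum_mono) (auto simp: less_imp_le)
  then show ?thesis using assms(2) by simp
qed

lemma G_le_tr:
  assumes "psd n A" "\<And>J. J \<in> pairs n \<Longrightarrow> p J > 0" "(\<Sum>J\<in>pairs n. p J) = 1"
  shows "G n p s A \<le> 1 / 2 ^ n * Re (tr n A)"
proof -
  have "G n p s A \<le> (\<Sum>h\<in>(UNIV::bool set). \<Sum>m\<in>bits n. 1 / 2 ^ (n + 1) * Q n A h m)"
    unfolding G_def
  proof (intro sum_mono)
    fix h m assume "m \<in> bits n"
    have "Q n A h m * V0 n p s m \<le> Q n A h m"
      using Q_nonneg[OF assms(1)] V0_le[OF assms(2,3)] by (rule mult_left_le[rotated])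
    then show "1 / 2 ^ (n + 1) * (Q n A h m * V0 n p s m) \<le> 1 / 2 ^ (n + 1) * Q n A h m"
      by (rule mult_left_mono) simp
  qed
  also have "\<dots> = (\<Sum>h\<in>(UNIV::bool set). 1 / 2 ^ (n + 1) * (\<Sum>m\<in>bits n. Q n A h m))"
    by (simp only: sum_distrib_left)
  also have "\<dots> = (\<Sum>h\<in>(UNIV::bool set). 1 / 2 ^ (n + 1) * Re (tr n A))"
    by (simp only: Qsum_1)
  also have "\<dots> = 1 / 2 ^ n * Re (tr n A)"
    by (simp add: UNIV_bool)
  finally show ?thesis .
qed


lemma term_eq_h:
  "(\<Sum>m\<in>bits n. 1 / 2 ^ (n + 1) * (Re (tr n (mmul n F (kP n h m))) * verify_prob n p s h m \<pi>))
      = (\<Sum>m\<in>bits n. 1 / 2 ^ (n + 1) * (Q n (conjop n (cvec n (fst \<pi>)) (cvec n (snd \<pi>)) F) h m * V0 n p s m))"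
proof -
  let ?c = "cor n h \<pi>"
  let ?g = "\<lambda>m. 1 / 2 ^ (n + 1) * (Q n F h m * V0 n p s (xorl m ?c))"
  have "(\<Sum>m\<in>bits n. 1 / 2 ^ (n + 1) * (Re (tr n (mmul n F (kP n h m))) * verify_prob n p s h m \<pi>))
      = (\<Sum>m\<in>bits n. ?g m)"
    by (intro sum.cong refl) (simp add: Q_kP verify_eq)
  also have "\<dots> = (\<Sum>m\<in>bits n. ?g (xorl m ?c))"
    by (rule sum_xorl[symmetric]) simp
  also have "\<dots> = (\<Sum>m\<in>bits n. 1 / 2 ^ (n + 1) * (Q n (conjop n (cvec n (fst \<pi>)) (cvec n (snd \<pi>)) F) h m * V0 n p s m))"
  proof (intro sum.cong refl)
    fix m assume m: "m \<in> bits n"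
    show "?g (xorl m ?c) = 1 / 2 ^ (n + 1) * (Q n (conjop n (cvec n (fst \<pi>)) (cvec n (snd \<pi>)) F) h m * V0 n p s m)"
      using Q_shift[of "cvec n (fst \<pi>)" n "cvec n (snd \<pi>)" m F h] m
      by (simp add: xorl_inv cor_def)
  qed
  finally show ?thesis .
qed

lemma term_eq:
  "(\<Sum>h\<in>(UNIV::bool set). \<Sum>m\<in>bits n. 1 / 2 ^ (n + 1) * (Re (tr n (mmul n F (kP n h m))) * verify_prob n p s h m \<pi>))
   = G n p s (conjop n (cvec n (fst \<pi>)) (cvec n (snd \<pi>)) F)"
  unfolding G_def term_eq_h ..

lemma term_bound:
  assumes Fpsd: "psd n F"
    and p_pos: "\<And>J. J \<in> pairs n \<Longrightarrow> p J > 0"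
    and p_sum: "(\<Sum>J\<in>pairs n. p J) = 1"
    and s_pm: "\<And>J. J \<in> pairs n \<Longrightarrow> s J \<in> {-1, 1}"
    and no: "\<And>\<rho>. density n \<rho> \<Longrightarrow> \<beta> \<le> Re (tr n (mmul n \<rho> (ham n p s)))"
    and b1: "\<beta> < 1"
  shows "(\<Sum>h\<in>(UNIV::bool set). \<Sum>m\<in>bits n. 1 / 2 ^ (n + 1) * (Re (tr n (mmul n F (kP n h m))) * verify_prob n p s h m \<pi>))
     \<le> (1 - \<beta>) / 2 ^ n * Re (tr n F)"
proof -
  define \<sigma> where "\<sigma> = conjop n (cvec n (fst \<pi>)) (cvec n (snd \<pi>)) F"
  define t where "t = Re (tr n F)"
  have spsd: "psd n \<sigma>" unfolding \<sigma>_def by (rule psd_conjop[OF Fpsd]) simp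
  have trs: "tr n \<sigma> = complex_of_real t"
    unfolding \<sigma>_def t_def by (simp add: tr_conjop tr_real(1)[OF Fpsd, symmetric])
  have t0: "0 \<le> t" unfolding t_def by (rule tr_real(2)[OF Fpsd])
  have Gf: "G n p s \<sigma> = 1 / 2 ^ n * (t - Re (tr n (mmul n \<sigma> (ham n p s))))"
    using G_formula[OF s_pm, where A=\<sigma> and p=p] p_sum trs by simp
  have "G n p s \<sigma> \<le> (1 - \<beta>) / 2 ^ n * t"
  proof (cases "t = 0")
    case True
    have "G n p s \<sigma> \<le> 1 / 2 ^ n * Re (tr n \<sigma>)" by (rule G_le_tr[OF spsd p_pos p_sum])
    then show ?thesis using True trs by simp
  next
    case False
    then have tp: "0 < t" using t0 by simp
    have "density n (\<lambda>a b. \<sigma> a b / complex_of_real t)"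
      unfolding density_def using psd_scale[OF spsd tp] tp by (simp add: tr_scale trs)
    then have "\<beta> \<le> Re (tr n (mmul n (\<lambda>a b. \<sigma> a b / complex_of_real t) (ham n p s)))" by (rule no)
    then have "\<beta> \<le> Re (tr n (mmul n \<sigma> (ham n p s))) / t"
      by (simp add: tr_mmul_scale Re_divide_of_real)
    then have "\<beta> * t \<le> Re (tr n (mmul n \<sigma> (ham n p s)))" using tp by (simp add: field_simps)
    then show ?thesis unfolding Gf by (simp add: field_simps)
  qed
  then show ?thesis unfolding term_eq \<sigma>_def[symmetric] t_def .
qed


lemma sum_tr_le:
  assumes "finite S" "psd n (\<lambda>a b. Idq n a b - (\<Sum>ou\<in>S. F ou a b))"
  shows "(\<Sum>ou\<in>S. Re (tr n (F ou))) \<le> 2 ^ n"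
proof -
  have "(\<Sum>ou\<in>S. Re (tr n (F ou))) = (\<Sum>a\<in>bits n. Re (\<Sum>ou\<in>S. F ou a a))"
    unfolding tr_def Re_sum by (rule sum.swap)
  also have "\<dots> \<le> (\<Sum>a\<in>bits n. 1)"
  proof (intro sum_mono)
    fix a assume a: "a \<in> bits n"
    have "0 \<le> Re (Idq n a a - (\<Sum>ou\<in>S. F ou a a))" using psd_diag[OF assms(2) a] by simp
    then show "Re (\<Sum>ou\<in>S. F ou a a) \<le> 1" using a by (simp add: Idq_eq)
  qed
  also have "\<dots> = 2 ^ n" by (simp add: card_bits)
  finally show ?thesis .
qed

theorem mainTheorem9:
  fixes N :: nat
    and Lyes Lno :: "'x set"
    and p s :: "'x \<Rightarrow> nat \<times> nat \<Rightarrow> real"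
    and R :: "'x \<Rightarrow> 'w set"
    and hist :: "'x \<Rightarrow> 'w \<Rightarrow> op"
    and \<alpha> \<beta> :: real
  assumes ab: "0 < \<alpha>" "\<alpha> < \<beta>" "\<beta> < 1"
    and p_pos: "\<And>x j1 j2. x \<in> Lyes \<union> Lno \<Longrightarrow> (j1, j2) \<in> pairs N \<Longrightarrow> p x (j1, j2) > 0"
    and p_sum: "\<And>x. x \<in> Lyes \<union> Lno \<Longrightarrow> (\<Sum>jj\<in>pairs N. p x jj) = 1"
    and s_pm: "\<And>x j1 j2. x \<in> Lyes \<union> Lno \<Longrightarrow> (j1, j2) \<in> pairs N \<Longrightarrow> s x (j1, j2) \<in> {-1, 1}"
    and yes: "\<And>x w. x \<in> Lyes \<Longrightarrow> w \<in> R x \<Longrightarrow>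
       density N (hist x w) \<and> Re (tr N (mmul N (hist x w) (ham N (p x) (s x)))) \<le> \<alpha>"
    and no: "\<And>x \<rho>. x \<in> Lno \<Longrightarrow> density N \<rho> \<Longrightarrow>
       Re (tr N (mmul N \<rho> (ham N (p x) (s x)))) \<ge> \<beta>"
  shows "(\<forall>x\<in>Lyes. \<forall>w\<in>R x. honest_accept N (p x) (s x) (hist x w) \<ge> 1 - \<alpha>)
       \<and> (\<forall>F :: 'x \<times> (bool list \<times> bool list) \<Rightarrow> op. adversary N F \<longrightarrow>
            (\<forall>S. finite S \<longrightarrow> cheat_prob N F Lno p s S \<le> 1 - \<beta>))"
proof (intro conjI ballI allI impI)
  fix x w assume x: "x \<in> Lyes" and w: "w \<in> R x"
  let ?\<rho> = "hist x w"
  have xs: "x \<in> Lyes \<union> Lno" using x by simp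
  have spm: "\<And>J. J \<in> pairs N \<Longrightarrow> s x J \<in> {-1, 1}"
    using s_pm[OF xs] by (metis prod.collapse)
  have d: "density N ?\<rho>" and E: "Re (tr N (mmul N ?\<rho> (ham N (p x) (s x)))) \<le> \<alpha>"
    using yes[OF x w] by auto
  have tr1: "tr N ?\<rho> = 1" using d by (simp add: density_def)
  have "honest_accept N (p x) (s x) ?\<rho> = 2 ^ N * G N (p x) (s x) ?\<rho>" by (rule honest_formula)
  also have "\<dots> = 1 - Re (tr N (mmul N ?\<rho> (ham N (p x) (s x))))"
    using G_formula[OF spm, where A="?\<rho>" and p="p x"] p_sum[OF xs] tr1 by simp
  finally show "1 - \<alpha> \<le> honest_accept N (p x) (s x) ?\<rho>" using E by simp
next
  fix F :: "'x \<times> (bool list \<times> bool list) \<Rightarrow> op" and S :: "('x \<times> (bool list \<times> bool list)) set"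
  assume adv: "adversary N F" and fin: "finite S"
  have Fpsd: "\<And>ou. psd N (F ou)" and Fle: "psd N (\<lambda>a b. Idq N a b - (\<Sum>ou\<in>S. F ou a b))"
    using adv fin unfolding adversary_def by auto
  define c :: real where "c = 1 / 2 ^ (N + 1)"
  define T where "T ou = (\<Sum>h\<in>(UNIV::bool set). \<Sum>m\<in>bits N. c *
      (Re (tr N (mmul N (F ou) (kP N h m))) * verify_prob N (p (fst ou)) (s (fst ou)) h m (snd ou)))" for ou
  have "cheat_prob N F Lno p s S = (\<Sum>h\<in>(UNIV::bool set). \<Sum>m\<in>bits N. \<Sum>ou\<in>S. c * (if fst ou \<in> Lno then
          Re (tr N (mmul N (F ou) (kP N h m))) * verify_prob N (p (fst ou)) (s (fst ou)) h m (snd ou) else 0))"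
    unfolding cheat_prob_def c_def by (simp add: sum_distrib_left)
  also have "\<dots> = (\<Sum>ou\<in>S. \<Sum>h\<in>(UNIV::bool set). \<Sum>m\<in>bits N. c * (if fst ou \<in> Lno then
          Re (tr N (mmul N (F ou) (kP N h m))) * verify_prob N (p (fst ou)) (s (fst ou)) h m (snd ou) else 0))"
    by (subst sum.swap, subst (2) sum.swap, rule refl)
  also have "\<dots> = (\<Sum>ou\<in>S. if fst ou \<in> Lno then T ou else 0)"
    unfolding T_def by (intro sum.cong refl) auto
  also have "\<dots> \<le> (\<Sum>ou\<in>S. (1 - \<beta>) / 2 ^ N * Re (tr N (F ou)))"
  proof (intro sum_mono)
    fix ou assume "ou \<in> S"
    show "(if fst ou \<in> Lno then T ou else 0) \<le> (1 - \<beta>) / 2 ^ N * Re (tr N (F ou))"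
    proof (cases "fst ou \<in> Lno")
      case True
      have xs: "fst ou \<in> Lyes \<union> Lno" using True by simp
      have "T ou \<le> (1 - \<beta>) / 2 ^ N * Re (tr N (F ou))"
        unfolding T_def c_def
      proof (rule term_bound[OF Fpsd])
        show "\<And>J. J \<in> pairs N \<Longrightarrow> p (fst ou) J > 0" using p_pos[OF xs] by (metis prod.collapse)
        show "(\<Sum>J\<in>pairs N. p (fst ou) J) = 1" by (rule p_sum[OF xs])
        show "\<And>J. J \<in> pairs N \<Longrightarrow> s (fst ou) J \<in> {-1, 1}" using s_pm[OF xs] by (metis prod.collapse)
        show "\<And>\<rho>. density N \<rho> \<Longrightarrow> \<beta> \<le> Re (tr N (mmul N \<rho> (ham N (p (fst ou)) (s (fst ou)))))"
          using no[OF True] by blast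
        show "\<beta> < 1" by (rule ab(3))
      qed
      then show ?thesis using True by simp
    next
      case False
      have "0 \<le> Re (tr N (F ou))" by (rule tr_real(2)[OF Fpsd])
      then show ?thesis using False ab(3) by simp
    qed
  qed
  also have "\<dots> = (1 - \<beta>) / 2 ^ N * (\<Sum>ou\<in>S. Re (tr N (F ou)))"
    by (simp add: sum_distrib_left)
  also have "\<dots> \<le> (1 - \<beta>) / 2 ^ N * 2 ^ N"
    using sum_tr_le[OF fin Fle] ab(3) by (intro mult_left_mono) auto
  also have "\<dots> = 1 - \<beta>" by simp
  finally show "cheat_prob N F Lno p s S \<le> 1 - \<beta>" .
qed


end
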